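(* Let $(\Omega,\mathscr A)$ be a measurable space, $\mathscr C\subseteq\mathscr A$ a concept class, and $I$ an ideal of subsets of $\Omega$. Let $S_I$ be the set of all ultrafilters on $\Omega$ containing no element of $I$, and regard each $C\in\mathscr C$ as the $\{0,1\}$-valued function $\xi\mapsto[C\in\xi]$ on $S_I$. For each $n\in\mathbb N$ the following are equivalent: (1) the VC dimension of $\mathscr C$ as a class of functions on $S_I$ is at least $n$; (2) there exist sets $A_1,\dots,A_n\subseteq\Omega$, none belonging to $I$, such that for every $J\subseteq\{1,\dots,n\}$ there is $C\in\mathscr C$ with $A_i\subseteq C$ for all $i\in J$ and $A_i\cap C=\emptyset$ for all $i\notin J$. Moreover, in (2) the sets $A_i$ can be chosen in $\mathscr A$.
   Context: An ideal of subsets of $\Omega$ is a family closed under finite unions and under taking subsets. An ultrafilter on $\Omega$ is a family $\xi$ of nonempty subsets closed under finite intersections such that for each $A\subseteq\Omega$ either $A\in\xi$ or $\Omega\setminus A\in\xi$. ($S_I$ is the Stone space of the quotient Boolean algebra $2^\Omega/I$.) *)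

theory Defs
  imports "HOL-Analysis.Analysis"
begin

definition is_ideal_on :: "'a set \<Rightarrow> 'a set set \<Rightarrow> bool" where
  "is_ideal_on \<Omega> I \<longleftrightarrow> I \<subseteq> Pow \<Omega> \<and> {} \<in> I \<and>
     (\<forall>A\<in>I. \<forall>B\<in>I. A \<union> B \<in> I) \<and> (\<forall>A\<in>I. \<forall>B. B \<subseteq> A \<longrightarrow> B \<in> I)"

definition is_ultrafilter_on :: "'a set \<Rightarrow> 'a set set \<Rightarrow> bool" where
  "is_ultrafilter_on \<Omega> \<xi> \<longleftrightarrow> (\<forall>A\<in>\<xi>. A \<subseteq> \<Omega> \<and> A \<noteq> {}) \<and>
     (\<forall>A\<in>\<xi>. \<forall>B\<in>\<xi>. A \<inter> B \<in> \<xi>) \<and>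
     (\<forall>A. A \<subseteq> \<Omega> \<longrightarrow> A \<in> \<xi> \<or> \<Omega> - A \<in> \<xi>)"

definition stone_space :: "'a set \<Rightarrow> 'a set set \<Rightarrow> 'a set set set" where
  "stone_space \<Omega> I = {\<xi>. is_ultrafilter_on \<Omega> \<xi> \<and> \<xi> \<inter> I = {}}"

definition shatters :: "'x set \<Rightarrow> ('x \<Rightarrow> bool) set \<Rightarrow> 'x set \<Rightarrow> bool" where
  "shatters D H X \<longleftrightarrow> X \<subseteq> D \<and>
     (\<forall>Y. Y \<subseteq> X \<longrightarrow> (\<exists>h\<in>H. \<forall>x\<in>X. h x \<longleftrightarrow> x \<in> Y))"

definition vc_dim_ge :: "'x set \<Rightarrow> ('x \<Rightarrow> bool) set \<Rightarrow> nat \<Rightarrow> bool" where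
  "vc_dim_ge D H n \<longleftrightarrow> (\<exists>X. finite X \<and> card X = n \<and> shatters D H X)"

end

theory Submission
  imports Defs
begin

lemma uf_disj: "is_ultrafilter_on \<Omega> \<xi> \<Longrightarrow> A \<in> \<xi> \<Longrightarrow> B \<in> \<xi> \<Longrightarrow> A \<inter> B \<noteq> {}"
  unfolding is_ultrafilter_on_def by blast

lemma uf_compl: "is_ultrafilter_on \<Omega> \<xi> \<Longrightarrow> A \<subseteq> \<Omega> \<Longrightarrow> A \<notin> \<xi> \<Longrightarrow> \<Omega> - A \<in> \<xi>"
  unfolding is_ultrafilter_on_def by blast

lemma uf_up: "is_ultrafilter_on \<Omega> \<xi> \<Longrightarrow> A \<in> \<xi> \<Longrightarrow> A \<subseteq> B \<Longrightarrow> B \<subseteq> \<Omega> \<Longrightarrow> B \<in> \<xi>"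
proof -
  assume u: "is_ultrafilter_on \<Omega> \<xi>" and a: "A \<in> \<xi>" "A \<subseteq> B" "B \<subseteq> \<Omega>"
  show "B \<in> \<xi>"
  proof (rule ccontr)
    assume "B \<notin> \<xi>"
    then have "\<Omega> - B \<in> \<xi>" using u a unfolding is_ultrafilter_on_def by blast
    with uf_disj[OF u a(1) this] a show False by blast
  qed
qed

lemma uf_Omega: "is_ultrafilter_on \<Omega> \<xi> \<Longrightarrow> \<Omega> \<in> \<xi>"
proof -
  assume u: "is_ultrafilter_on \<Omega> \<xi>"
  have "{} \<in> \<xi> \<or> \<Omega> - {} \<in> \<xi>" using u unfolding is_ultrafilter_on_def by blast
  moreover have "{} \<notin> \<xi>" using u unfolding is_ultrafilter_on_def by blast
  ultimately show ?thesis by simp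
qed

lemma uf_Inter: assumes u: "is_ultrafilter_on \<Omega> \<xi>" and fin: "finite F" and sub: "F \<subseteq> \<xi>"
  shows "\<Omega> \<inter> \<Inter>F \<in> \<xi>"
  using fin sub
proof (induction F rule: finite_induct)
  case empty
  then show ?case using uf_Omega[OF u] by auto
next
  case (insert x F)
  then have "(\<Omega> \<inter> \<Inter>F) \<inter> x \<in> \<xi>" using u unfolding is_ultrafilter_on_def by auto
  then show ?case by (simp add: Int_ac)
qed

definition isfilt :: "'a set \<Rightarrow> 'a set set \<Rightarrow> bool" where
  "isfilt \<Omega> F \<longleftrightarrow> F \<subseteq> Pow \<Omega> \<and> {} \<notin> F \<and> \<Omega> \<in> F \<and> (\<forall>A\<in>F. \<forall>B\<in>F. A \<inter> B \<in> F)
     \<and> (\<forall>A\<in>F. \<forall>B. A \<subseteq> B \<and> B \<subseteq> \<Omega> \<longrightarrow> B \<in> F)"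

lemma isfiltD:
  assumes "isfilt \<Omega> F"
  shows "F \<subseteq> Pow \<Omega>" "{} \<notin> F" "\<Omega> \<in> F" "\<And>A B. A \<in> F \<Longrightarrow> B \<in> F \<Longrightarrow> A \<inter> B \<in> F"
    "\<And>A B. A \<in> F \<Longrightarrow> A \<subseteq> B \<Longrightarrow> B \<subseteq> \<Omega> \<Longrightarrow> B \<in> F"
  using assms unfolding isfilt_def by blast+

lemma ultra_exists:
  assumes F0: "isfilt \<Omega> F0"
  shows "\<exists>\<xi>. is_ultrafilter_on \<Omega> \<xi> \<and> F0 \<subseteq> \<xi>"
proof -
  let ?S = "{F. isfilt \<Omega> F \<and> F0 \<subseteq> F}"
  have "\<exists>M\<in>?S. \<forall>X\<in>?S. M \<subseteq> X \<longrightarrow> X = M"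
  proof (rule subset_Zorn_nonempty)
    show "?S \<noteq> {}" using F0 by blast
  next
    fix \<C> assume ne: "\<C> \<noteq> {}" and ch: "subset.chain ?S \<C>"
    have sub: "\<And>F. F \<in> \<C> \<Longrightarrow> isfilt \<Omega> F \<and> F0 \<subseteq> F"
      using ch by (auto simp: subset_chain_def)
    have tot: "\<forall>X\<in>\<C>. \<forall>Y\<in>\<C>. X \<subseteq> Y \<or> Y \<subseteq> X"
      using ch by (auto simp: subset_chain_def)
    obtain F1 where F1: "F1 \<in> \<C>" using ne by blast
    have "isfilt \<Omega> (\<Union>\<C>)"
      unfolding isfilt_def
    proof (intro conjI ballI allI impI)
      show "\<Union>\<C> \<subseteq> Pow \<Omega>"
      proof
        fix A assume "A \<in> \<Union>\<C>"
        then obtain X where "X \<in> \<C>" "A \<in> X" by blast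
        then show "A \<in> Pow \<Omega>" using isfiltD(1)[of \<Omega> X] sub by blast
      qed
      show "{} \<notin> \<Union>\<C>"
      proof
        assume "{} \<in> \<Union>\<C>"
        then obtain X where "X \<in> \<C>" "{} \<in> X" by blast
        then show False using isfiltD(2)[of \<Omega> X] sub by blast
      qed
      show "\<Omega> \<in> \<Union>\<C>" using isfiltD(3)[of \<Omega> F1] sub[OF F1] F1 by blast
    next
      fix A B assume "A \<in> \<Union>\<C>" "B \<in> \<Union>\<C>"
      then obtain X Y where X: "X \<in> \<C>" "A \<in> X" and Y: "Y \<in> \<C>" "B \<in> Y" by blast
      show "A \<inter> B \<in> \<Union>\<C>"
      proof (cases "X \<subseteq> Y")
        case True
        have "isfilt \<Omega> Y" using sub Y by blast
        then have "A \<inter> B \<in> Y" using True X Y isfiltD(4) by blast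
        then show ?thesis using Y by blast
      next
        case False
        with tot X Y have "Y \<subseteq> X" by blast
        have "isfilt \<Omega> X" using sub X by blast
        then have "A \<inter> B \<in> X" using \<open>Y \<subseteq> X\<close> X Y isfiltD(4) by blast
        then show ?thesis using X by blast
      qed
    next
      fix A B assume "A \<in> \<Union>\<C>" and AB: "A \<subseteq> B \<and> B \<subseteq> \<Omega>"
      then obtain X where X: "X \<in> \<C>" "A \<in> X" by blast
      have "isfilt \<Omega> X" using sub X by blast
      then have "B \<in> X" using X AB isfiltD(5) by blast
      then show "B \<in> \<Union>\<C>" using X by blast
    qed
    moreover have "F0 \<subseteq> \<Union>\<C>" using sub[OF F1] F1 by blast
    ultimately show "\<Union>\<C> \<in> ?S" by blast
  qed
  then obtain M where M0: "M \<in> ?S" and max0: "\<forall>X\<in>?S. M \<subseteq> X \<longrightarrow> X = M"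
    by (rule bexE)
  have M: "isfilt \<Omega> M" "F0 \<subseteq> M" using M0 by simp_all
  have max: "X = M" if "isfilt \<Omega> X" "F0 \<subseteq> X" "M \<subseteq> X" for X
    using max0 that by simp
  note MD = isfiltD[OF M(1)]
  have "is_ultrafilter_on \<Omega> M"
    unfolding is_ultrafilter_on_def
  proof (intro conjI ballI allI impI)
    fix A assume "A \<in> M" then show "A \<subseteq> \<Omega>" "A \<noteq> {}" using MD(1,2) by blast+
  next
    fix A B assume "A \<in> M" "B \<in> M" then show "A \<inter> B \<in> M" using MD(4) by blast
  next
    fix A assume A: "A \<subseteq> \<Omega>"
    show "A \<in> M \<or> \<Omega> - A \<in> M"
    proof (cases "\<exists>B\<in>M. B \<inter> A = {}")
      case True
      then obtain B where B: "B \<in> M" "B \<inter> A = {}" by blast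
      moreover have "B \<subseteq> \<Omega>" using MD(1) B by blast
      ultimately have "B \<subseteq> \<Omega> - A" by blast
      then have "\<Omega> - A \<in> M" using MD(5)[OF B(1)] by blast
      then show ?thesis by blast
    next
      case False
      define N where "N = {X. X \<subseteq> \<Omega> \<and> (\<exists>B\<in>M. B \<inter> A \<subseteq> X)}"
      have "isfilt \<Omega> N"
        unfolding isfilt_def
      proof (intro conjI ballI allI impI)
        show "N \<subseteq> Pow \<Omega>" unfolding N_def by blast
        show "{} \<notin> N" using False unfolding N_def by blast
        show "\<Omega> \<in> N" using MD(3) unfolding N_def by blast
      next
        fix X Y assume "X \<in> N" "Y \<in> N"
        then obtain B1 B2 where "B1 \<in> M" "B1 \<inter> A \<subseteq> X" "B2 \<in> M" "B2 \<inter> A \<subseteq> Y" "X \<subseteq> \<Omega>" "Y \<subseteq> \<Omega>"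
          unfolding N_def by blast
        moreover have "B1 \<inter> B2 \<in> M" using MD(4) \<open>B1 \<in> M\<close> \<open>B2 \<in> M\<close> by blast
        ultimately show "X \<inter> Y \<in> N" unfolding N_def by blast
      next
        fix X Y assume "X \<in> N" "X \<subseteq> Y \<and> Y \<subseteq> \<Omega>"
        then show "Y \<in> N" unfolding N_def by blast
      qed
      moreover have "M \<subseteq> N"
      proof
        fix X assume "X \<in> M"
        then show "X \<in> N" using MD(1) unfolding N_def by blast
      qed
      moreover have "A \<in> N" using MD(3) A unfolding N_def by blast
      ultimately have "N = M" using max M(2) by blast
      with \<open>A \<in> N\<close> show ?thesis by blast
    qed
  qed
  then show ?thesis using M(2) by (intro exI[of _ M]) simp
qed

lemma nonempty_witness_Int: "X \<inter> Y \<noteq> {} \<Longrightarrow> (\<And>K. K \<in> X \<Longrightarrow> K \<in> Y \<Longrightarrow> P) \<Longrightarrow> P"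
  by blast

lemma stone_point:
  assumes I: "is_ideal_on \<Omega> I" and A: "A \<subseteq> \<Omega>" "A \<notin> I"
  shows "\<exists>\<xi>\<in>stone_space \<Omega> I. A \<in> \<xi>"
proof -
  let ?F = "{B. B \<subseteq> \<Omega> \<and> (\<exists>K\<in>I. A - K \<subseteq> B)}"
  have e: "{} \<in> I" using I by (simp add: is_ideal_on_def)
  have "isfilt \<Omega> ?F"
    unfolding isfilt_def
  proof (intro conjI ballI allI impI)
    show "?F \<subseteq> Pow \<Omega>" by blast
    show "{} \<notin> ?F"
    proof
      assume "{} \<in> ?F"
      then obtain K where "K \<in> I" "A \<subseteq> K" by blast
      moreover have "\<forall>K\<in>I. \<forall>B. B \<subseteq> K \<longrightarrow> B \<in> I" using I unfolding is_ideal_on_def by (elim conjE)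
      ultimately have "A \<in> I" by blast
      then show False using A by blast
    qed
    show "\<Omega> \<in> ?F" using e A by blast
  next
    fix X Y assume "X \<in> ?F" "Y \<in> ?F"
    then obtain K1 K2 where "K1 \<in> I" "K2 \<in> I" "A - K1 \<subseteq> X" "A - K2 \<subseteq> Y" "X \<subseteq> \<Omega>" "Y \<subseteq> \<Omega>" by blast
    moreover have "K1 \<union> K2 \<in> I" using I \<open>K1 \<in> I\<close> \<open>K2 \<in> I\<close> by (simp add: is_ideal_on_def)
    moreover have "A - (K1 \<union> K2) \<subseteq> X \<inter> Y" using calculation by blast
    ultimately show "X \<inter> Y \<in> ?F" by (intro CollectI conjI bexI[of _ "K1 \<union> K2"]) blast+
  next
    fix X Y assume "X \<in> ?F" "X \<subseteq> Y \<and> Y \<subseteq> \<Omega>"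
    then show "Y \<in> ?F" by blast
  qed
  from ultra_exists[OF this] obtain \<xi> where u: "is_ultrafilter_on \<Omega> \<xi>" and F: "?F \<subseteq> \<xi>"
    by (elim exE conjE)
  have disj: "\<xi> \<inter> I = {}"
  proof (rule ccontr)
    assume "\<xi> \<inter> I \<noteq> {}"
    then obtain K where K: "K \<in> \<xi>" "K \<in> I" by (elim nonempty_witness_Int)
    have "A - K \<subseteq> \<Omega> - K" using A(1) by (rule Diff_mono) simp
    then have "\<Omega> - K \<in> ?F" using K(2) by auto
    then have "\<Omega> - K \<in> \<xi>" using F by blast
    from uf_disj[OF u K(1) this] show False by simp
  qed
  have "A - {} \<subseteq> A" by simp
  then have "A \<in> ?F" using A(1) e by auto
  then have Ax: "A \<in> \<xi>" using F by blast
  have "\<xi> \<in> stone_space \<Omega> I" using u disj unfolding stone_space_def by simp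
  then show ?thesis using Ax by (rule bexI[rotated])
qed

theorem mainTheorem8:
  fixes M :: "'a measure" and \<C> :: "'a set set" and I :: "'a set set" and n :: nat
  assumes "\<C> \<subseteq> sets M"
    and "is_ideal_on (space M) I"
  shows "(vc_dim_ge (stone_space (space M) I) ((\<lambda>C \<xi>. C \<in> \<xi>) ` \<C>) n
           \<longleftrightarrow> (\<exists>A :: nat \<Rightarrow> 'a set. (\<forall>i<n. A i \<subseteq> space M \<and> A i \<notin> I) \<and>
                 (\<forall>J \<subseteq> {..<n}. \<exists>C\<in>\<C>. (\<forall>i\<in>J. A i \<subseteq> C) \<and> (\<forall>i\<in>{..<n} - J. A i \<inter> C = {}))))
       \<and> (vc_dim_ge (stone_space (space M) I) ((\<lambda>C \<xi>. C \<in> \<xi>) ` \<C>) n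
           \<longleftrightarrow> (\<exists>A :: nat \<Rightarrow> 'a set. (\<forall>i<n. A i \<in> sets M \<and> A i \<notin> I) \<and>
                 (\<forall>J \<subseteq> {..<n}. \<exists>C\<in>\<C>. (\<forall>i\<in>J. A i \<subseteq> C) \<and> (\<forall>i\<in>{..<n} - J. A i \<inter> C = {}))))"
  (is "(?V \<longleftrightarrow> ?P1) \<and> (?V \<longleftrightarrow> ?P2)")
proof -
  define \<Omega> where "\<Omega> = space M"
  have CO: "\<And>C. C \<in> \<C> \<Longrightarrow> C \<subseteq> \<Omega>" using assms(1) sets.sets_into_space unfolding \<Omega>_def by blast
  have P21: "?P2 \<Longrightarrow> ?P1"
  proof -
    assume ?P2
    then obtain A :: "nat \<Rightarrow> 'a set" where A1: "\<forall>i<n. A i \<in> sets M \<and> A i \<notin> I"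
      and A2: "\<forall>J \<subseteq> {..<n}. \<exists>C\<in>\<C>. (\<forall>i\<in>J. A i \<subseteq> C) \<and> (\<forall>i\<in>{..<n} - J. A i \<inter> C = {})"
      by blast
    have "\<forall>i<n. A i \<subseteq> space M \<and> A i \<notin> I" using A1 sets.sets_into_space by blast
    with A2 show ?P1 by blast
  qed
  have V2: "?V \<Longrightarrow> ?P2"
  proof -
    assume ?V
    then obtain X where X: "finite X" "card X = n" "shatters (stone_space \<Omega> I) ((\<lambda>C \<xi>. C \<in> \<xi>) ` \<C>) X"
      unfolding vc_dim_ge_def \<Omega>_def by blast
    obtain f where f: "bij_betw f {0..<n} X" using ex_bij_betw_nat_finite[OF X(1)] X(2) by blast
    have Xs: "X \<subseteq> stone_space \<Omega> I" using X(3) by (simp add: shatters_def)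
    have ex: "\<exists>C. C \<in> \<C> \<and> (\<forall>x\<in>X. C \<in> x \<longleftrightarrow> x \<in> Y)" if "Y \<subseteq> X" for Y
      using X(3) that unfolding shatters_def by blast
    define CC where "CC Y = (SOME C. C \<in> \<C> \<and> (\<forall>x\<in>X. C \<in> x \<longleftrightarrow> x \<in> Y))" for Y
    have CC: "CC Y \<in> \<C> \<and> (\<forall>x\<in>X. CC Y \<in> x \<longleftrightarrow> x \<in> Y)" if "Y \<subseteq> X" for Y
      unfolding CC_def using someI_ex[OF ex[OF that]] .
    define T where "T i Y = (if f i \<in> Y then CC Y else \<Omega> - CC Y)" for i Y
    define A where "A i = \<Omega> \<inter> \<Inter>(T i ` Pow X)" for i
    show ?P2
    proof (intro exI conjI allI impI)
      fix i assume i: "i < n"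
      have fi: "f i \<in> X" using f i by (auto simp: bij_betw_def)
      have Tm: "T i Y \<in> sets M" if "Y \<subseteq> X" for Y
        using CC[OF that] assms(1) unfolding T_def \<Omega>_def by auto
      have "(\<Inter>Y\<in>Pow X. T i Y) \<in> sets M"
        by (rule sets.finite_INT) (use X(1) Tm in auto)
      then show "A i \<in> sets M" unfolding A_def \<Omega>_def by auto
      have u: "is_ultrafilter_on \<Omega> (f i)" and dI: "f i \<inter> I = {}"
        using Xs fi by (auto simp: stone_space_def)
      have "T i Y \<in> f i" if "Y \<subseteq> X" for Y
      proof (cases "f i \<in> Y")
        case True then show ?thesis using CC[OF that] fi unfolding T_def by auto
      next
        case False
        then have "CC Y \<notin> f i" using CC[OF that] fi by auto
        moreover have "CC Y \<subseteq> \<Omega>" using CC[OF that] CO by blast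
        then have "\<Omega> - CC Y \<in> f i" using uf_compl[OF u] \<open>CC Y \<notin> f i\<close> by blast
        then show ?thesis using False unfolding T_def by simp
      qed
      then have "T i ` Pow X \<subseteq> f i" by blast
      moreover have "finite (T i ` Pow X)" using X(1) by simp
      ultimately have "\<Omega> \<inter> \<Inter>(T i ` Pow X) \<in> f i" using uf_Inter[OF u] by blast
      then have "A i \<in> f i" unfolding A_def .
      then show "A i \<notin> I" using dI by blast
    next
      fix J assume J: "J \<subseteq> {..<n}"
      let ?Y = "f ` J"
      have Y: "?Y \<subseteq> X" using f J by (auto simp: bij_betw_def)
      show "\<exists>C\<in>\<C>. (\<forall>i\<in>J. A i \<subseteq> C) \<and> (\<forall>i\<in>{..<n} - J. A i \<inter> C = {})"
      proof (intro bexI conjI ballI)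
        show "CC ?Y \<in> \<C>" using CC[OF Y] by blast
      next
        fix i assume "i \<in> J"
        then have "A i \<subseteq> T i ?Y" unfolding A_def using Y by blast
        then show "A i \<subseteq> CC ?Y" using \<open>i \<in> J\<close> unfolding T_def by auto
      next
        fix i assume i: "i \<in> {..<n} - J"
        have "f i \<notin> ?Y"
        proof
          assume "f i \<in> ?Y"
          then obtain j where "j \<in> J" "f i = f j" by blast
          then have "i = j" using f i J unfolding bij_betw_def inj_on_def by auto
          with i \<open>j \<in> J\<close> show False by blast
        qed
        moreover have "A i \<subseteq> T i ?Y" unfolding A_def using Y by blast
        ultimately show "A i \<inter> CC ?Y = {}" unfolding T_def by auto
      qed
    qed
  qed
  have P1V: "?P1 \<Longrightarrow> ?V"
  proof -
    assume ?P1
    then obtain A where A: "\<And>i. i<n \<Longrightarrow> A i \<subseteq> \<Omega> \<and> A i \<notin> I"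
      and sh: "\<And>J. J \<subseteq> {..<n} \<Longrightarrow> \<exists>C\<in>\<C>. (\<forall>i\<in>J. A i \<subseteq> C) \<and> (\<forall>i\<in>{..<n} - J. A i \<inter> C = {})"
      unfolding \<Omega>_def by blast
    have "\<forall>i. \<exists>\<xi>. i < n \<longrightarrow> \<xi> \<in> stone_space \<Omega> I \<and> A i \<in> \<xi>"
      using stone_point[OF assms(2)[folded \<Omega>_def]] A by blast
    then obtain \<xi> where \<xi>: "\<And>i. i < n \<Longrightarrow> \<xi> i \<in> stone_space \<Omega> I \<and> A i \<in> \<xi> i" by metis
    have u: "\<And>i. i < n \<Longrightarrow> is_ultrafilter_on \<Omega> (\<xi> i)" using \<xi> by (auto simp: stone_space_def)
    have key: "C \<in> \<xi> i \<longleftrightarrow> i \<in> J"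
      if "i < n" "C \<in> \<C>" "J \<subseteq> {..<n}" "\<forall>i\<in>J. A i \<subseteq> C" "\<forall>i\<in>{..<n} - J. A i \<inter> C = {}" for i C J
    proof (cases "i \<in> J")
      case True
      then have "A i \<subseteq> C" using that by blast
      then show ?thesis using uf_up[OF u[OF that(1)]] \<xi>[OF that(1)] CO[OF that(2)] True by blast
    next
      case False
      then have "A i \<inter> C = {}" using that by blast
      then have "C \<notin> \<xi> i" using uf_disj[OF u[OF that(1)]] \<xi>[OF that(1)] by blast
      then show ?thesis using False by blast
    qed
    have inj: "inj_on \<xi> {..<n}"
    proof (rule inj_onI)
      fix i j assume i: "i \<in> {..<n}" and j: "j \<in> {..<n}" and e: "\<xi> i = \<xi> j"
      obtain C where C: "C \<in> \<C>" "\<forall>k\<in>{i}. A k \<subseteq> C" "\<forall>k\<in>{..<n} - {i}. A k \<inter> C = {}"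
        using sh[of "{i}"] i by blast
      have "C \<in> \<xi> i" using key[of i C "{i}"] C i by auto
      then have "C \<in> \<xi> j" using e by simp
      then show "i = j" using key[of j C "{i}"] C i j by auto
    qed
    let ?X = "\<xi> ` {..<n}"
    have "shatters (stone_space \<Omega> I) ((\<lambda>C \<xi>. C \<in> \<xi>) ` \<C>) ?X"
      unfolding shatters_def
    proof (intro conjI allI impI)
      show "?X \<subseteq> stone_space \<Omega> I" using \<xi> by blast
    next
      fix Y assume Y: "Y \<subseteq> ?X"
      let ?J = "{i. i < n \<and> \<xi> i \<in> Y}"
      obtain C where C: "C \<in> \<C>" "\<forall>i\<in>?J. A i \<subseteq> C" "\<forall>i\<in>{..<n} - ?J. A i \<inter> C = {}"
        using sh[of ?J] by blast
      show "\<exists>h\<in>(\<lambda>C \<xi>. C \<in> \<xi>) ` \<C>. \<forall>x\<in>?X. h x \<longleftrightarrow> x \<in> Y"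
      proof (intro bexI ballI)
        show "(\<lambda>\<xi>. C \<in> \<xi>) \<in> (\<lambda>C \<xi>. C \<in> \<xi>) ` \<C>" using C by blast
      next
        fix x assume "x \<in> ?X"
        then obtain i where i: "i < n" "x = \<xi> i" by blast
        show "C \<in> x \<longleftrightarrow> x \<in> Y" using key[of i C ?J] C i by auto
      qed
    qed
    moreover have "card ?X = n" using card_image[OF inj] by simp
    ultimately have "vc_dim_ge (stone_space \<Omega> I) ((\<lambda>C \<xi>. C \<in> \<xi>) ` \<C>) n"
      unfolding vc_dim_ge_def by blast
    then show ?V unfolding \<Omega>_def .
  qed
  show ?thesis using P21 V2 P1V by blast
qed

end
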